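(* Let $A$ be an integral domain containing $\mathbb{Q}$ and let $D$ be a locally nilpotent derivation of $A$. Let $a,b,\lambda\in A$ and $\mu\in\ker D$, all nonzero, and suppose $\lambda\, a\, D(b)=\mu\, b\, D(a)$. Then either $D(a)=D(b)=0$, or $\lambda\mu^{-1}$ (an element of the fraction field of $A$) is a positive rational number.
   Context: A derivation $D$ of $A$ is an additive map satisfying $D(ab)=aD(b)+D(a)b$; it is locally nilpotent if for every $a\in A$ there is $n$ with $D^n(a)=0$. $\ker D=\{a\in A: D(a)=0\}$. *)

theory Defs
  imports Main
begin

definition derivation :: "('a::comm_ring_1 \<Rightarrow> 'a) \<Rightarrow> bool" where
  "derivation D \<longleftrightarrow> (\<forall>x y. D (x + y) = D x + D y) \<and> (\<forall>x y. D (x * y) = x * D y + D x * y)"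

definition locally_nilpotent :: "('a::comm_ring_1 \<Rightarrow> 'a) \<Rightarrow> bool" where
  "locally_nilpotent D \<longleftrightarrow> (\<forall>a. \<exists>n. (D ^^ n) a = 0)"

definition lnd :: "('a::comm_ring_1 \<Rightarrow> 'a) \<Rightarrow> bool" where
  "lnd D \<longleftrightarrow> derivation D \<and> locally_nilpotent D"

definition ker :: "('a::comm_ring_1 \<Rightarrow> 'a) \<Rightarrow> 'a set" where
  "ker D = {a. D a = 0}"

end

theory Submission
  imports Defs
begin

lemma pascal_sum:
  fixes A B :: "nat \<Rightarrow> 'a::comm_semiring_1"
  shows "(\<Sum>k\<le>n. of_nat (n choose k) * (A k * B (Suc (n-k)) + A (Suc k) * B (n-k)))
       = (\<Sum>k\<le>Suc n. of_nat (Suc n choose k) * A k * B (Suc n - k))"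
proof -
  have 1: "(\<Sum>k\<le>n. of_nat (n choose k) * A k * B (Suc (n-k)))
       = A 0 * B (Suc n) + (\<Sum>i\<le>n. of_nat (n choose Suc i) * A (Suc i) * B (n - i))"
  proof -
    have "(\<Sum>k\<le>n. of_nat (n choose k) * A k * B (Suc (n-k)))
        = (\<Sum>k\<le>Suc n. of_nat (n choose k) * A k * B (Suc (n-k)))"
      by (simp add: binomial_eq_0)
    also have "\<dots> = A 0 * B (Suc n) + (\<Sum>i\<le>n. of_nat (n choose Suc i) * A (Suc i) * B (Suc (n - Suc i)))"
      by (subst sum.atMost_Suc_shift) simp
    also have "(\<Sum>i\<le>n. of_nat (n choose Suc i) * A (Suc i) * B (Suc (n - Suc i)))
        = (\<Sum>i\<le>n. of_nat (n choose Suc i) * A (Suc i) * B (n - i))"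
    proof (rule sum.cong)
      fix x assume "x \<in> {..n}"
      then consider "x = n" | "x < n" by fastforce
      then show "of_nat (n choose Suc x) * A (Suc x) * B (Suc (n - Suc x)) = of_nat (n choose Suc x) * A (Suc x) * B (n - x)"
        by cases (simp_all add: Suc_diff_Suc binomial_eq_0)
    qed simp
    finally show ?thesis .
  qed
  have 2: "(\<Sum>k\<le>Suc n. of_nat (Suc n choose k) * A k * B (Suc n - k))
     = A 0 * B (Suc n) + (\<Sum>i\<le>n. of_nat (n choose i) * A (Suc i) * B (n - i))
       + (\<Sum>i\<le>n. of_nat (n choose Suc i) * A (Suc i) * B (n - i))"
    by (subst sum.atMost_Suc_shift) (simp add: sum.distrib algebra_simps)
  show ?thesis
    using 1 2 by (simp add: sum.distrib algebra_simps)
qed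


definition hasdeg :: "('a::idom \<Rightarrow> 'a) \<Rightarrow> 'a \<Rightarrow> nat \<Rightarrow> bool" where
  "hasdeg D x n \<longleftrightarrow> (D ^^ n) x \<noteq> 0 \<and> (D ^^ Suc n) x = 0"

context
  fixes D :: "'a::idom \<Rightarrow> 'a"
  assumes der: "derivation D"
begin

lemma D_add: "D (x + y) = D x + D y" using der by (simp add: derivation_def)
lemma D_mult: "D (x * y) = x * D y + D x * y" using der by (simp add: derivation_def)
lemma D_0: "D 0 = 0" using D_add[of 0 0] by (metis add.right_neutral add_left_cancel)
lemma D_sum: "D (sum f A) = (\<Sum>a\<in>A. D (f a))"
  by (induction A rule: infinite_finite_induct) (auto simp: D_0 D_add)
lemma D_of_nat: "D (of_nat c * z) = of_nat c * D z"
  by (induction c) (auto simp: D_0 D_add algebra_simps)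
lemma Dn_0: "(D ^^ n) 0 = 0" by (induction n) (auto simp: D_0)

lemma leibniz: "(D ^^ n) (x * y) = (\<Sum>k\<le>n. of_nat (n choose k) * (D ^^ k) x * (D ^^ (n - k)) y)"
proof (induction n)
  case 0 then show ?case by simp
next
  case (Suc n)
  have "(D ^^ Suc n) (x * y) = D ((D ^^ n) (x * y))" by simp
  also have "\<dots> = (\<Sum>k\<le>n. of_nat (n choose k) * D ((D ^^ k) x * (D ^^ (n - k)) y))"
    by (simp add: Suc D_sum D_of_nat mult.assoc)
  also have "\<dots> = (\<Sum>k\<le>n. of_nat (n choose k) * ((\<lambda>k. (D ^^ k) x) k * (\<lambda>k. (D ^^ k) y) (Suc (n-k))
      + (\<lambda>k. (D ^^ k) x) (Suc k) * (\<lambda>k. (D ^^ k) y) (n-k)))"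
    by (simp add: D_mult)
  also have "\<dots> = (\<Sum>k\<le>Suc n. of_nat (Suc n choose k) * (D ^^ k) x * (D ^^ (Suc n - k)) y)"
    by (rule pascal_sum)
  finally show ?case .
qed


lemma vanish: assumes "(D ^^ Suc n) x = 0" "k > n" shows "(D ^^ k) x = 0"
proof -
  have "k = (k - Suc n) + Suc n" using assms by simp
  then have "(D ^^ k) x = (D ^^ (k - Suc n)) ((D ^^ Suc n) x)"
    by (metis funpow_add o_apply)
  then show ?thesis using assms Dn_0 by simp
qed

lemma hasdeg_unique: assumes "hasdeg D x n" "hasdeg D x n'" shows "n = n'"
proof (rule ccontr)
  assume "n \<noteq> n'"
  then consider "n < n'" | "n' < n" by linarith
  then show False
  proof cases
    case 1 then show False using assms vanish[of n x n'] unfolding hasdeg_def by blast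
  next
    case 2 then show False using assms vanish[of n' x n] unfolding hasdeg_def by blast
  qed
qed

lemma hasdeg_exists:
  assumes "locally_nilpotent D" "x \<noteq> 0" shows "\<exists>n. hasdeg D x n"
proof -
  obtain m where m: "(D ^^ m) x = 0" using assms unfolding locally_nilpotent_def by blast
  define k where "k = (LEAST m. (D ^^ m) x = 0)"
  have k: "(D ^^ k) x = 0" unfolding k_def using m by (rule LeastI)
  have k0: "k \<noteq> 0"
  proof
    assume "k = 0" with k have "x = 0" by simp
    with assms show False by simp
  qed
  then obtain n where n: "k = Suc n" by (cases k) auto
  have "(D ^^ n) x \<noteq> 0"
  proof
    assume "(D ^^ n) x = 0"
    then have "k \<le> n" unfolding k_def by (rule Least_le)
    with n show False by simp
  qed
  then show ?thesis using k n unfolding hasdeg_def by blast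
qed

lemma hasdeg_D: assumes "hasdeg D x (Suc p)" shows "hasdeg D (D x) p"
  using assms unfolding hasdeg_def by (simp add: funpow_Suc_right del: funpow.simps)

lemma hasdeg_prod:
  assumes char0: "\<And>c::nat. c > 0 \<Longrightarrow> (of_nat c :: 'a) \<noteq> 0"
    and hx: "hasdeg D x p" and hy: "hasdeg D y q"
  shows "(D ^^ (p + q)) (x * y) = of_nat ((p + q) choose p) * (D ^^ p) x * (D ^^ q) y"
    and "hasdeg D (x * y) (p + q)"
proof -
  have x0: "\<And>k. k > p \<Longrightarrow> (D ^^ k) x = 0" using hx vanish unfolding hasdeg_def by blast
  have y0: "\<And>k. k > q \<Longrightarrow> (D ^^ k) y = 0" using hy vanish unfolding hasdeg_def by blast
  have "(D ^^ (p + q)) (x * y) = (\<Sum>k\<le>p+q. of_nat ((p+q) choose k) * (D ^^ k) x * (D ^^ (p+q - k)) y)"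
    by (rule leibniz)
  also have "\<dots> = (\<Sum>k\<in>{p}. of_nat ((p+q) choose k) * (D ^^ k) x * (D ^^ (p+q - k)) y)"
  proof (rule sum.mono_neutral_right)
    show "\<forall>i\<in>{..p + q} - {p}. of_nat (p + q choose i) * (D ^^ i) x * (D ^^ (p + q - i)) y = 0"
    proof
      fix i assume "i \<in> {..p + q} - {p}"
      then have "i > p \<or> p + q - i > q" by auto
      then show "of_nat (p + q choose i) * (D ^^ i) x * (D ^^ (p + q - i)) y = 0"
        using x0 y0 by auto
    qed
  qed auto
  finally show eq: "(D ^^ (p + q)) (x * y) = of_nat ((p + q) choose p) * (D ^^ p) x * (D ^^ q) y"
    by simp
  have "(D ^^ Suc (p + q)) (x * y) = (\<Sum>k\<le>Suc (p+q). of_nat (Suc (p+q) choose k) * (D ^^ k) x * (D ^^ (Suc (p+q) - k)) y)"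
    by (rule leibniz)
  also have "\<dots> = 0"
  proof (rule sum.neutral, rule ballI)
    fix i assume "i \<in> {..Suc (p + q)}"
    then have "i > p \<or> Suc (p + q) - i > q" by auto
    then show "of_nat (Suc (p + q) choose i) * (D ^^ i) x * (D ^^ (Suc (p + q) - i)) y = 0"
      using x0 y0 by auto
  qed
  finally have "(D ^^ Suc (p + q)) (x * y) = 0" .
  moreover have "(D ^^ (p + q)) (x * y) \<noteq> 0"
    using eq hx hy char0[of "(p + q) choose p"] unfolding hasdeg_def by simp
  ultimately show "hasdeg D (x * y) (p + q)" unfolding hasdeg_def by blast
qed

lemma ker_commute: assumes "D l = 0" shows "(D ^^ n) (l * z) = l * (D ^^ n) z"
  by (induction n) (auto simp: D_mult assms)

end

theorem corollary3p4:
  fixes D :: "'a::idom \<Rightarrow> 'a" and a b l m :: 'a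
  assumes contains_Q: "\<And>n::nat. n > 0 \<Longrightarrow> \<exists>y::'a. of_nat n * y = 1"
    and D: "lnd D"
    and nz: "a \<noteq> 0" "b \<noteq> 0" "l \<noteq> 0" "m \<noteq> 0"
    and m_ker: "m \<in> ker D"
    and eq: "l * a * D b = m * b * D a"
  shows "(D a = 0 \<and> D b = 0) \<or>
         (\<exists>p q :: nat. p > 0 \<and> q > 0 \<and> of_nat q * l = of_nat p * m)"
proof (cases "D a = 0 \<and> D b = 0")
  case True then show ?thesis by blast
next
  case False
  have der: "derivation D" and ln: "locally_nilpotent D" using D by (auto simp: lnd_def)
  have char0: "(of_nat c :: 'a) \<noteq> 0" if c0: "c > 0" for c :: nat
  proof -
    obtain y where "of_nat c * y = (1::'a)" using contains_Q[OF c0] by blast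
    then show ?thesis by auto
  qed
  have Dm: "D m = 0" using m_ker by (simp add: ker_def)
  have Da: "D a \<noteq> 0"
  proof
    assume "D a = 0"
    then have "D b \<noteq> 0" using False by blast
    moreover have "l * a * D b = 0" using eq \<open>D a = 0\<close> by simp
    ultimately show False using nz by simp
  qed
  have Db: "D b \<noteq> 0"
  proof
    assume "D b = 0"
    then have "m * b * D a = 0" using eq by simp
    then show False using nz Da by simp
  qed
  obtain p where hp: "hasdeg D a p" using hasdeg_exists[OF der ln nz(1)] by blast
  obtain q where hq: "hasdeg D b q" using hasdeg_exists[OF der ln nz(2)] by blast
  obtain r where hr: "hasdeg D l r" using hasdeg_exists[OF der ln nz(3)] by blast
  have hm: "hasdeg D m 0" using Dm nz by (simp add: hasdeg_def)
  have "p \<noteq> 0" using hp Da by (cases p) (auto simp: hasdeg_def)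
  then obtain p' where p: "p = Suc p'" by (cases p) auto
  have "q \<noteq> 0" using hq Db by (cases q) (auto simp: hasdeg_def)
  then obtain q' where q: "q = Suc q'" by (cases q) auto
  have hDa: "hasdeg D (D a) p'" using hasdeg_D[OF der] hp p by blast
  have hDb: "hasdeg D (D b) q'" using hasdeg_D[OF der] hq q by blast
  have d1: "hasdeg D (l * a * D b) (r + p + q')"
    by (rule hasdeg_prod(2)[OF der char0 hasdeg_prod(2)[OF der char0 hr hp] hDb])
  have d2: "hasdeg D (m * b * D a) (0 + q + p')"
    by (rule hasdeg_prod(2)[OF der char0 hasdeg_prod(2)[OF der char0 hm hq] hDa])
  have "r + p + q' = 0 + q + p'" using hasdeg_unique[OF der d1] d2 eq by simp
  then have "r = 0" using p q by simp
  then have Dl: "D l = 0" using hr by (simp add: hasdeg_def)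
  define N where "N = p + q'"
  have e1: "(D ^^ N) (a * D b) = of_nat (N choose p) * (D ^^ p) a * (D ^^ q) b"
    using hasdeg_prod(1)[OF der char0 hp hDb] q unfolding N_def
    by (simp add: funpow_Suc_right del: funpow.simps)
  have e2: "(D ^^ N) (b * D a) = of_nat (N choose q) * (D ^^ q) b * (D ^^ p) a"
    using hasdeg_prod(1)[OF der char0 hq hDa] p q unfolding N_def
    by (simp add: funpow_Suc_right add.commute del: funpow.simps)
  have "(D ^^ N) (l * (a * D b)) = (D ^^ N) (m * (b * D a))" using eq by (simp add: mult.assoc)
  then have "l * (of_nat (N choose p) * (D ^^ p) a * (D ^^ q) b)
           = m * (of_nat (N choose q) * (D ^^ q) b * (D ^^ p) a)"
    using ker_commute[OF der Dl] ker_commute[OF der Dm] e1 e2 by simp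
  moreover have "(D ^^ p) a * (D ^^ q) b \<noteq> 0" using hp hq by (simp add: hasdeg_def)
  ultimately have "(of_nat (N choose p) * l) * ((D ^^ p) a * (D ^^ q) b) = (of_nat (N choose q) * m) * ((D ^^ p) a * (D ^^ q) b)"
    by (simp add: ac_simps)
  then have "of_nat (N choose p) * l = of_nat (N choose q) * m"
    using \<open>(D ^^ p) a * (D ^^ q) b \<noteq> 0\<close> by simp
  moreover have "N choose p > 0" "N choose q > 0" using p q unfolding N_def by auto
  ultimately show ?thesis by blast
qed

end
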